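(* Fix a slot $n$, a state $(\mathbf x(n),\mathbf g(n))$ of the model in the context, and a policy $\pi\in\Pi_{n-1}$ choosing the withdrawal vector $\mathbf y(n)$ at slot $n$. Let $\mathbf D=\mathbf y^{MB}(n)-\mathbf y(n)$ and let $F=\{f: D_f\ge+1\}$ and $T=\{t:D_t\le-1\}$, assumed non-empty. Then there exist $f\in F$ and $t\in T$ such that the interchange $\mathbf I(f,t)$ is feasible.
   Context: Model: real queues $1,\dots,L$, dummy queue $0$, $K$ identical servers. State: queue lengths $x_i(n)\in\mathbb Z_+$ ($x_0=0$), connectivities $g_{i,j}(n)\in\{0,1\}$ ($g_{0,j}=1$). A scheduling control $\mathbf q\in\{0,\dots,L\}^K$ (server $j$ serves $q_j$, $0$ = idle) is feasible if $g_{q_j,j}=1$ for all $j$ and each real queue $i$ gets at most $x_i$ servers; withdrawal vector $y_i=\#\{j:q_j=i\}$; feasible withdrawal vectors arise from feasible controls. A policy chooses at each slot a feasible withdrawal vector as a measurable function of history. Updated sizes $\hat x_i=x_i-y_i$; imbalance index $\kappa_t=\sum_{i=1}^{L}\sum_{j=i+1}^{L+1}(\hat x_{[i]}-\hat x_{[j]})$ with $[1],\dots,[L]$ ordering the real queues by non-increasing $\hat x$, $[L+1]=0$. MB property at slot $t$: the chosen vector minimizes $\kappa_t$ over feasible vectors; an MB policy has it at every slot; $\Pi_{n-1}$ = policies having it at all slots $t\le n-1$. $\mathbf y^{MB}(n)$ is the vector chosen by an MB policy at slot $n$ in the same state. Interchange $\mathbf I(f,t)$ ($f\ne t$): $+1$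 at $f$, $-1$ at $t$, $0$ elsewhere; feasible if $\mathbf y(n)+\mathbf I(f,t)$ is a feasible withdrawal vector. *)

theory Defs
  imports Main
begin

text \<open>Real queues are indexed 1..L, the dummy queue is 0, servers are indexed 1..K.
  Queue lengths: x :: nat => nat (x i for i in 1..L; x 0 is irrelevant, the dummy queue
  has no capacity constraint).  Connectivities: g i j for real queue i and server j
  (the dummy queue is always connected).  A scheduling control q maps server j to q j in 0..L.\<close>

definition feasible_control ::
  "nat \<Rightarrow> nat \<Rightarrow> (nat \<Rightarrow> nat) \<Rightarrow> (nat \<Rightarrow> nat \<Rightarrow> bool) \<Rightarrow> (nat \<Rightarrow> nat) \<Rightarrow> bool" where
  "feasible_control L K x g q \<longleftrightarrow>
     (\<forall>j\<in>{1..K}. q j \<le> L \<and> (q j = 0 \<or> g (q j) j)) \<and>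
     (\<forall>i\<in>{1..L}. card {j\<in>{1..K}. q j = i} \<le> x i)"

definition withdrawal :: "nat \<Rightarrow> (nat \<Rightarrow> nat) \<Rightarrow> nat \<Rightarrow> int" where
  "withdrawal K q i = int (card {j\<in>{1..K}. q j = i})"

definition feasible_withdrawal ::
  "nat \<Rightarrow> nat \<Rightarrow> (nat \<Rightarrow> nat) \<Rightarrow> (nat \<Rightarrow> nat \<Rightarrow> bool) \<Rightarrow> (nat \<Rightarrow> int) \<Rightarrow> bool" where
  "feasible_withdrawal L K x g y \<longleftrightarrow>
     (\<exists>q. feasible_control L K x g q \<and> (\<forall>i\<in>{0..L}. y i = withdrawal K q i))"

text \<open>Imbalance index: sort updated sizes xhat_i = x_i - y_i (i = 1..L) non-increasingly,
  append xhat_[L+1] = 0, and sum the pairwise differences xhat_[i] - xhat_[j], i < j.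
  (0-based list positions below.)\<close>
definition imbalance :: "nat \<Rightarrow> (nat \<Rightarrow> nat) \<Rightarrow> (nat \<Rightarrow> int) \<Rightarrow> int" where
  "imbalance L x y =
     (let s = rev (sort (map (\<lambda>i. int (x i) - y i) [1..<L+1])) @ [0]
      in (\<Sum>i<L. \<Sum>j\<in>{i+1..L}. s ! i - s ! j))"

definition is_MB ::
  "nat \<Rightarrow> nat \<Rightarrow> (nat \<Rightarrow> nat) \<Rightarrow> (nat \<Rightarrow> nat \<Rightarrow> bool) \<Rightarrow> (nat \<Rightarrow> int) \<Rightarrow> bool" where
  "is_MB L K x g y \<longleftrightarrow> feasible_withdrawal L K x g y \<and>
     (\<forall>y'. feasible_withdrawal L K x g y' \<longrightarrow> imbalance L x y \<le> imbalance L x y')"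

definition interchange :: "nat \<Rightarrow> nat \<Rightarrow> nat \<Rightarrow> int" where
  "interchange f t i = (if i = f then 1 else if i = t then -1 else 0)"

end

theory Submission
  imports Defs
begin

definition cnt :: "nat \<Rightarrow> (nat \<Rightarrow> nat) \<Rightarrow> nat \<Rightarrow> nat" where
  "cnt K q i = card {j\<in>{1..K}. q j = i}"

lemma cnt_upd:
  assumes j: "j \<in> {1..K}" and ne: "q j \<noteq> f"
  shows "cnt K (q(j:=f)) i = (if i = f then cnt K q f + 1 else if i = q j then cnt K q i - 1 else cnt K q i)"
proof -
  have fin: "finite {k\<in>{1..K}. q k = i}" by simp
  show ?thesis
  proof (cases "i = f")
    case True
    have "{k\<in>{1..K}. (q(j:=f)) k = i} = insert j {k\<in>{1..K}. q k = i}" using True j by auto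
    moreover have "j \<notin> {k\<in>{1..K}. q k = i}" using True ne by auto
    ultimately show ?thesis using True fin unfolding cnt_def by simp
  next
    case False
    show ?thesis
    proof (cases "i = q j")
      case True
      have "{k\<in>{1..K}. (q(j:=f)) k = i} = {k\<in>{1..K}. q k = i} - {j}" using True False j by auto
      moreover have "j \<in> {k\<in>{1..K}. q k = i}" using True j by auto
      ultimately show ?thesis using True False fin unfolding cnt_def by simp
    next
      case F2: False
      have "{k\<in>{1..K}. (q(j:=f)) k = i} = {k\<in>{1..K}. q k = i}" using F2 False j by auto
      then show ?thesis using F2 False unfolding cnt_def by simp
    qed
  qed
qed

lemma aug:
  assumes "n = card {j\<in>{1..K}. q j \<noteq> q' j}"
    and "feasible_control L K x g q" and q': "feasible_control L K x g q'"
    and "f \<le> L" and "cnt K q' f > cnt K q f"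
  shows "\<exists>t\<le>L. cnt K q' t < cnt K q t \<and> (\<exists>q''. feasible_control L K x g q'' \<and>
            (\<forall>i. int (cnt K q'' i) = int (cnt K q i) + interchange f t i))"
  using assms
proof (induction n arbitrary: q f rule: less_induct)
  case (less n q f)
  note qf = less.prems(2)
  have "\<not> {j\<in>{1..K}. q' j = f} \<subseteq> {j\<in>{1..K}. q j = f}"
  proof
    assume "{j\<in>{1..K}. q' j = f} \<subseteq> {j\<in>{1..K}. q j = f}"
    then have "cnt K q' f \<le> cnt K q f" unfolding cnt_def by (intro card_mono) auto
    then show False using less.prems(5) by simp
  qed
  then obtain j where j: "j \<in> {1..K}" "q' j = f" "q j \<noteq> f" by auto
  define t1 where "t1 = q j"
  define q1 where "q1 = q(j := f)"
  have t1L: "t1 \<le> L" using qf j unfolding feasible_control_def t1_def by auto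
  have c1: "\<And>i. cnt K q1 i = (if i = f then cnt K q f + 1 else if i = t1 then cnt K q i - 1 else cnt K q i)"
    unfolding q1_def t1_def using cnt_upd[of j K q f, OF j(1) j(3)] by simp
  have pos: "cnt K q t1 \<ge> 1"
  proof -
    have "j \<in> {k\<in>{1..K}. q k = t1}" using j t1_def by auto
    then have "{k\<in>{1..K}. q k = t1} \<noteq> {}" by auto
    then have "card {k\<in>{1..K}. q k = t1} > 0" by (intro card_gt_0_iff[THEN iffD2]) auto
    then show ?thesis unfolding cnt_def by simp
  qed
  have q1f: "feasible_control L K x g q1"
    unfolding feasible_control_def
  proof (rule conjI; rule ballI)
    fix k assume k: "k \<in> {1..K}"
    show "q1 k \<le> L \<and> (q1 k = 0 \<or> g (q1 k) k)"
    proof (cases "k = j")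
      case True
      have "q' k \<le> L \<and> (q' k = 0 \<or> g (q' k) k)" using q' k unfolding feasible_control_def by blast
      then show ?thesis using True j unfolding q1_def by simp
    next
      case False
      have "q k \<le> L \<and> (q k = 0 \<or> g (q k) k)" using qf k unfolding feasible_control_def by blast
      then show ?thesis using False unfolding q1_def by simp
    qed
  next
    fix i assume i: "i \<in> {1..L}"
    have a: "cnt K q i \<le> x i" "cnt K q' i \<le> x i"
      using qf q' i unfolding feasible_control_def cnt_def by auto
    have "cnt K q1 i \<le> x i" using c1[of i] a less.prems(5) by auto
    then show "card {j\<in>{1..K}. q1 j = i} \<le> x i" unfolding cnt_def .
  qed
  have ft1: "f \<noteq> t1" using j t1_def by auto
  show ?case
  proof (cases "cnt K q' t1 < cnt K q t1")
    case True
    show ?thesis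
    proof (intro exI[of _ t1] conjI exI[of _ q1] allI)
      show "t1 \<le> L" by fact
      show "cnt K q' t1 < cnt K q t1" by fact
      show "feasible_control L K x g q1" by fact
      fix i show "int (cnt K q1 i) = int (cnt K q i) + interchange f t1 i"
        using c1[of i] pos ft1 unfolding interchange_def by auto
    qed
  next
    case False
    have lt: "cnt K q1 t1 < cnt K q' t1" using False c1[of t1] ft1 pos by auto
    have sub: "{k\<in>{1..K}. q1 k \<noteq> q' k} \<subseteq> {k\<in>{1..K}. q k \<noteq> q' k} - {j}"
      unfolding q1_def using j by auto
    have "card {k\<in>{1..K}. q1 k \<noteq> q' k} < n"
    proof -
      have "card {k\<in>{1..K}. q1 k \<noteq> q' k} \<le> card ({k\<in>{1..K}. q k \<noteq> q' k} - {j})"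
        by (rule card_mono[OF _ sub]) simp
      also have "\<dots> < card {k\<in>{1..K}. q k \<noteq> q' k}"
        using j by (intro psubset_card_mono) auto
      finally show ?thesis using less.prems(1) by simp
    qed
    from less.IH[OF this refl q1f q' t1L lt]
    obtain t q'' where t: "t \<le> L" "cnt K q' t < cnt K q1 t" "feasible_control L K x g q''"
      "\<forall>i. int (cnt K q'' i) = int (cnt K q1 i) + interchange t1 t i" by blast
    have tt1: "t \<noteq> t1" using t(2) lt by auto
    have tf: "t \<noteq> f" using t(2) c1[of f] less.prems(5) by auto
    have ctt: "cnt K q1 t = cnt K q t" using c1[of t] tt1 tf by simp
    show ?thesis
    proof (intro exI[of _ t] conjI exI[of _ q''] allI)
      show "t \<le> L" by fact
      show "cnt K q' t < cnt K q t" using t(2) ctt by simp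
      show "feasible_control L K x g q''" by fact
      fix i show "int (cnt K q'' i) = int (cnt K q i) + interchange f t i"
        using t(4) c1[of i] pos ft1 tt1 tf unfolding interchange_def by auto
    qed
  qed
qed

theorem mainTheorem13:
  fixes L K :: nat and x :: "nat \<Rightarrow> nat" and g :: "nat \<Rightarrow> nat \<Rightarrow> bool"
    and y yMB :: "nat \<Rightarrow> int"
  assumes y_feas: "feasible_withdrawal L K x g y"
    and MB: "is_MB L K x g yMB"
    and F_ne: "{f\<in>{0..L}. yMB f - y f \<ge> 1} \<noteq> {}"
    and T_ne: "{t\<in>{0..L}. yMB t - y t \<le> -1} \<noteq> {}"
  shows "\<exists>f\<in>{f\<in>{0..L}. yMB f - y f \<ge> 1}. \<exists>t\<in>{t\<in>{0..L}. yMB t - y t \<le> -1}.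
           feasible_withdrawal L K x g (\<lambda>i. y i + interchange f t i)"
proof -
  obtain q where q: "feasible_control L K x g q" "\<forall>i\<in>{0..L}. y i = int (cnt K q i)"
    using y_feas unfolding feasible_withdrawal_def withdrawal_def cnt_def by auto
  obtain q' where q': "feasible_control L K x g q'" "\<forall>i\<in>{0..L}. yMB i = int (cnt K q' i)"
    using MB unfolding is_MB_def feasible_withdrawal_def withdrawal_def cnt_def by auto
  obtain f where f: "f \<in> {0..L}" "yMB f - y f \<ge> 1" using F_ne by auto
  have "cnt K q' f > cnt K q f" using f q q' by auto
  from aug[OF refl q(1) q'(1) _ this] f(1)
  obtain t q'' where t: "t \<le> L" "cnt K q' t < cnt K q t" "feasible_control L K x g q''"
      "\<forall>i. int (cnt K q'' i) = int (cnt K q i) + interchange f t i" by auto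
  have "t \<in> {t\<in>{0..L}. yMB t - y t \<le> -1}" using t q q' by auto
  moreover have "feasible_withdrawal L K x g (\<lambda>i. y i + interchange f t i)"
    unfolding feasible_withdrawal_def withdrawal_def
    using t(3,4) q(2) by (intro exI[of _ q'']) (auto simp: cnt_def)
  ultimately show ?thesis using f by blast
qed

end
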